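(* The vector space $A$, with $b\cdot a=ba$ ($b\in B$, $a\in A$), coaction $\delta(a)=a_{(1)}\otimes\pi_C(a_{(2)})$, and inner product $\langle a,a'\rangle=\Phi_A(a^*a')$, is a unitary DK-representation, i.e. an object of ${}_B\mathrm{Rep}^C$.
   Context: $A$ is a CQG Hopf $*$-algebra: a complex Hopf algebra $(A,\Delta_A,\varepsilon_A,S_A)$ with anti-linear involution making it a $*$-algebra with $\Delta_A$ a $*$-homomorphism, admitting a state $\Phi_A$ with $(\Phi_A\otimes\mathrm{id})\Delta_A(a)=\Phi_A(a)1=(\mathrm{id}\otimes\Phi_A)\Delta_A(a)$. $B\subseteq A$ is a unital right coideal $*$-subalgebra ($\Delta_A(B)\subseteq B\odot A$), $B_+=B\cap\ker\varepsilon_A$, $C=A/AB_+$ with quotient map $\pi_C$; $C$ is a coalgebra (comultiplication induced by $\Delta_A$), a left $A$-module by $a\cdot\pi_C(a')=\pi_C(aa')$, with involution $\pi_C(a)^\dagger=\pi_C(S_A(a)^* )$. ${}_B\mathrm{Rep}^C$: left $B$-modules $V$ with right $C$-comodule structure $v\mapsto v_{(0)}\otimes v_{(1)}$ satisfying $(bv)_{(0)}\otimes(bv)_{(1)}=b_{(1)}v_{(0)}\otimes b_{(2)}\cdot v_{(1)}$, which are pre-Hilbert spaces with $\langle v,bw\rangle=\langle b^*v,w\rangle$ and $\langle v,w_{(0)}\rangle w_{(1)}=\langle v_{(0)},w\rangle v_{(1)}^\dagger$. *)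

theory Defs
  imports Complex_Main
begin

text \<open>
  Algebraic tensors in V (x) W are represented by
  finite lists of pairs (sums of simple tensors); two such lists denote the same tensor iff
  every bilinear form on V x W takes the same value on them (this characterises equality in
  the algebraic tensor product over a field). Elements of C = A / A B_+ are represented by
  elements of A (representatives of pi_C); equality in C is membership of the difference in
  the left ideal A B_+. Tensors in V (x) C are lists in V x A compared by bilinear forms
  vanishing on V x A B_+, i.e. by the dual of V (x) C.
\<close>

definition cvec :: "(complex \<Rightarrow> 'v::ab_group_add \<Rightarrow> 'v) \<Rightarrow> bool" where
  "cvec sc \<longleftrightarrow> (\<forall>c x y. sc c (x + y) = sc c x + sc c y) \<and> (\<forall>c d x. sc (c + d) x = sc c x + sc d x)
     \<and> (\<forall>c d x. sc c (sc d x) = sc (c * d) x) \<and> (\<forall>x. sc 1 x = x)"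

definition calg :: "(complex \<Rightarrow> 'a::ring_1 \<Rightarrow> 'a) \<Rightarrow> bool" where
  "calg sc \<longleftrightarrow> cvec sc \<and> (\<forall>c a b. sc c (a * b) = sc c a * b \<and> sc c (a * b) = a * sc c b)"

definition linf :: "(complex \<Rightarrow> 'v::ab_group_add \<Rightarrow> 'v) \<Rightarrow> ('v \<Rightarrow> complex) \<Rightarrow> bool" where
  "linf sc f \<longleftrightarrow> (\<forall>x y. f (x + y) = f x + f y) \<and> (\<forall>c x. f (sc c x) = c * f x)"

definition linmap :: "(complex \<Rightarrow> 'v::ab_group_add \<Rightarrow> 'v) \<Rightarrow> (complex \<Rightarrow> 'w::ab_group_add \<Rightarrow> 'w) \<Rightarrow> ('v \<Rightarrow> 'w) \<Rightarrow> bool" where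
  "linmap scV scW f \<longleftrightarrow> (\<forall>x y. f (x + y) = f x + f y) \<and> (\<forall>c x. f (scV c x) = scW c (f x))"

definition bilin :: "(complex \<Rightarrow> 'v::ab_group_add \<Rightarrow> 'v) \<Rightarrow> (complex \<Rightarrow> 'w::ab_group_add \<Rightarrow> 'w)
    \<Rightarrow> ('v \<Rightarrow> 'w \<Rightarrow> complex) \<Rightarrow> bool" where
  "bilin scV scW \<beta> \<longleftrightarrow> (\<forall>y. linf scV (\<lambda>x. \<beta> x y)) \<and> (\<forall>x. linf scW (\<lambda>y. \<beta> x y))"

definition trilin :: "(complex \<Rightarrow> 'u::ab_group_add \<Rightarrow> 'u) \<Rightarrow> (complex \<Rightarrow> 'v::ab_group_add \<Rightarrow> 'v)
    \<Rightarrow> (complex \<Rightarrow> 'w::ab_group_add \<Rightarrow> 'w) \<Rightarrow> ('u \<Rightarrow> 'v \<Rightarrow> 'w \<Rightarrow> complex) \<Rightarrow> bool" where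
  "trilin scU scV scW \<gamma> \<longleftrightarrow> (\<forall>y z. linf scU (\<lambda>x. \<gamma> x y z)) \<and> (\<forall>x z. linf scV (\<lambda>y. \<gamma> x y z))
     \<and> (\<forall>x y. linf scW (\<lambda>z. \<gamma> x y z))"

definition tsum :: "('v \<Rightarrow> 'w \<Rightarrow> complex) \<Rightarrow> ('v \<times> 'w) list \<Rightarrow> complex" where
  "tsum \<beta> xs = sum_list (map (\<lambda>(x, y). \<beta> x y) xs)"

definition teq :: "(complex \<Rightarrow> 'v::ab_group_add \<Rightarrow> 'v) \<Rightarrow> (complex \<Rightarrow> 'w::ab_group_add \<Rightarrow> 'w)
    \<Rightarrow> ('v \<times> 'w) list \<Rightarrow> ('v \<times> 'w) list \<Rightarrow> bool" where
  "teq scV scW xs ys \<longleftrightarrow> (\<forall>\<beta>. bilin scV scW \<beta> \<longrightarrow> tsum \<beta> xs = tsum \<beta> ys)"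

definition cqg_hopf :: "(complex \<Rightarrow> 'a::ring_1 \<Rightarrow> 'a) \<Rightarrow> ('a \<Rightarrow> ('a \<times> 'a) list) \<Rightarrow> ('a \<Rightarrow> complex)
    \<Rightarrow> ('a \<Rightarrow> 'a) \<Rightarrow> ('a \<Rightarrow> 'a) \<Rightarrow> ('a \<Rightarrow> complex) \<Rightarrow> bool" where
  "cqg_hopf sc \<Delta> \<epsilon> S st \<Phi> \<longleftrightarrow>
     calg sc
   \<comment> \<open>comultiplication: linear, unital, multiplicative, coassociative\<close>
   \<and> (\<forall>x y. teq sc sc (\<Delta> (x + y)) (\<Delta> x @ \<Delta> y))
   \<and> (\<forall>c x. teq sc sc (\<Delta> (sc c x)) (map (\<lambda>(p, q). (sc c p, q)) (\<Delta> x)))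
   \<and> (\<forall>x y. teq sc sc (\<Delta> (x * y)) [(p * p', q * q'). (p, q) \<leftarrow> \<Delta> x, (p', q') \<leftarrow> \<Delta> y])
   \<and> teq sc sc (\<Delta> 1) [(1, 1)]
   \<and> (\<forall>\<gamma> a. trilin sc sc sc \<gamma> \<longrightarrow>
        sum_list (map (\<lambda>(p, q). sum_list (map (\<lambda>(r, s). \<gamma> r s q) (\<Delta> p))) (\<Delta> a))
      = sum_list (map (\<lambda>(p, q). sum_list (map (\<lambda>(r, s). \<gamma> p r s) (\<Delta> q))) (\<Delta> a)))
   \<comment> \<open>counit: linear, multiplicative, unital\<close>
   \<and> linf sc \<epsilon> \<and> (\<forall>x y. \<epsilon> (x * y) = \<epsilon> x * \<epsilon> y) \<and> \<epsilon> 1 = 1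
   \<and> (\<forall>a. sum_list (map (\<lambda>(p, q). sc (\<epsilon> p) q) (\<Delta> a)) = a)
   \<and> (\<forall>a. sum_list (map (\<lambda>(p, q). sc (\<epsilon> q) p) (\<Delta> a)) = a)
   \<comment> \<open>antipode\<close>
   \<and> linmap sc sc S
   \<and> (\<forall>a. sum_list (map (\<lambda>(p, q). S p * q) (\<Delta> a)) = sc (\<epsilon> a) 1)
   \<and> (\<forall>a. sum_list (map (\<lambda>(p, q). p * S q) (\<Delta> a)) = sc (\<epsilon> a) 1)
   \<comment> \<open>anti-linear involution making A a *-algebra, Delta a *-homomorphism\<close>
   \<and> (\<forall>x y. st (x + y) = st x + st y) \<and> (\<forall>c x. st (sc c x) = sc (cnj c) (st x))
   \<and> (\<forall>x. st (st x) = x) \<and> (\<forall>x y. st (x * y) = st y * st x)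
   \<and> (\<forall>a. teq sc sc (\<Delta> (st a)) (map (\<lambda>(p, q). (st p, st q)) (\<Delta> a)))
   \<comment> \<open>Phi is a state (positive unital linear functional), left and right invariant\<close>
   \<and> linf sc \<Phi> \<and> \<Phi> 1 = 1 \<and> (\<forall>a. Im (\<Phi> (st a * a)) = 0 \<and> Re (\<Phi> (st a * a)) \<ge> 0)
   \<and> (\<forall>a. sum_list (map (\<lambda>(p, q). sc (\<Phi> p) q) (\<Delta> a)) = sc (\<Phi> a) 1)
   \<and> (\<forall>a. sum_list (map (\<lambda>(p, q). sc (\<Phi> q) p) (\<Delta> a)) = sc (\<Phi> a) 1)"

definition right_coideal_star_subalg :: "(complex \<Rightarrow> 'a::ring_1 \<Rightarrow> 'a) \<Rightarrow> ('a \<Rightarrow> ('a \<times> 'a) list)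
    \<Rightarrow> ('a \<Rightarrow> 'a) \<Rightarrow> 'a set \<Rightarrow> bool" where
  "right_coideal_star_subalg sc \<Delta> st B \<longleftrightarrow>
     1 \<in> B \<and> (\<forall>x\<in>B. \<forall>y\<in>B. x + y \<in> B \<and> x * y \<in> B) \<and> (\<forall>c. \<forall>x\<in>B. sc c x \<in> B)
   \<and> (\<forall>x\<in>B. st x \<in> B)
   \<and> (\<forall>b\<in>B. \<exists>xs. (\<forall>(p, q)\<in>set xs. p \<in> B) \<and> teq sc sc (\<Delta> b) xs)"

definition Bplus :: "('a \<Rightarrow> complex) \<Rightarrow> 'a set \<Rightarrow> 'a set" where
  "Bplus \<epsilon> B = {b \<in> B. \<epsilon> b = 0}"

definition ABplus :: "('a \<Rightarrow> complex) \<Rightarrow> 'a::ring_1 set \<Rightarrow> 'a set" where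
  "ABplus \<epsilon> B = {sum_list (map (\<lambda>(a, b). a * b) xs) | xs. \<forall>(a, b)\<in>set xs. b \<in> Bplus \<epsilon> B}"

definition teqC :: "(complex \<Rightarrow> 'v::ab_group_add \<Rightarrow> 'v) \<Rightarrow> (complex \<Rightarrow> 'a::ring_1 \<Rightarrow> 'a) \<Rightarrow> 'a set
    \<Rightarrow> ('v \<times> 'a) list \<Rightarrow> ('v \<times> 'a) list \<Rightarrow> bool" where
  "teqC scV sc J xs ys \<longleftrightarrow>
     (\<forall>\<beta>. bilin scV sc \<beta> \<and> (\<forall>x y. y \<in> J \<longrightarrow> \<beta> x y = 0) \<longrightarrow> tsum \<beta> xs = tsum \<beta> ys)"

text \<open>Objects of the category _B Rep^C (unitary DK-representations). act is the B-action,
  \<delta> the C-coaction v \<mapsto> v_(0) (x) v_(1), ip the inner product (linear in the second argument).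
  C carries comultiplication pi(a) \<mapsto> pi(a_(1)) (x) pi(a_(2)), counit pi(a) \<mapsto> eps a, left A-action
  a . pi(a') = pi(a a') and involution pi(a)^dagger = pi(S(a)^*).\<close>
definition DK_rep :: "(complex \<Rightarrow> 'a::ring_1 \<Rightarrow> 'a) \<Rightarrow> ('a \<Rightarrow> ('a \<times> 'a) list) \<Rightarrow> ('a \<Rightarrow> complex)
    \<Rightarrow> ('a \<Rightarrow> 'a) \<Rightarrow> ('a \<Rightarrow> 'a) \<Rightarrow> 'a set
    \<Rightarrow> (complex \<Rightarrow> 'v::ab_group_add \<Rightarrow> 'v) \<Rightarrow> ('a \<Rightarrow> 'v \<Rightarrow> 'v) \<Rightarrow> ('v \<Rightarrow> ('v \<times> 'a) list)
    \<Rightarrow> ('v \<Rightarrow> 'v \<Rightarrow> complex) \<Rightarrow> bool" where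
  "DK_rep sc \<Delta> \<epsilon> S st B scV act \<delta> ip \<longleftrightarrow>
   (let J = ABplus \<epsilon> B in
     cvec scV
   \<comment> \<open>left B-module\<close>
   \<and> (\<forall>b\<in>B. linmap scV scV (act b))
   \<and> (\<forall>b\<in>B. \<forall>b'\<in>B. \<forall>v. act (b + b') v = act b v + act b' v \<and> act (b * b') v = act b (act b' v))
   \<and> (\<forall>c. \<forall>b\<in>B. \<forall>v. act (sc c b) v = scV c (act b v))
   \<and> (\<forall>v. act 1 v = v)
   \<comment> \<open>right C-comodule\<close>
   \<and> (\<forall>v w. teqC scV sc J (\<delta> (v + w)) (\<delta> v @ \<delta> w))
   \<and> (\<forall>c v. teqC scV sc J (\<delta> (scV c v)) (map (\<lambda>(x, y). (scV c x, y)) (\<delta> v)))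
   \<and> (\<forall>v. sum_list (map (\<lambda>(x, y). scV (\<epsilon> y) x) (\<delta> v)) = v)
   \<and> (\<forall>\<gamma> v. trilin scV sc sc \<gamma> \<and> (\<forall>x y z. y \<in> J \<longrightarrow> \<gamma> x y z = 0)
          \<and> (\<forall>x y z. z \<in> J \<longrightarrow> \<gamma> x y z = 0) \<longrightarrow>
        sum_list (map (\<lambda>(x, y). sum_list (map (\<lambda>(x', y'). \<gamma> x' y' y) (\<delta> x))) (\<delta> v))
      = sum_list (map (\<lambda>(x, y). sum_list (map (\<lambda>(p, q). \<gamma> x p q) (\<Delta> y))) (\<delta> v)))
   \<comment> \<open>compatibility (bv)_(0) (x) (bv)_(1) = b_(1) v_(0) (x) b_(2) . v_(1),
       for any representative of Delta(b) in B (x) A\<close>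
   \<and> (\<forall>b\<in>B. \<forall>v xs. (\<forall>(p, q)\<in>set xs. p \<in> B) \<and> teq sc sc (\<Delta> b) xs \<longrightarrow>
        teqC scV sc J (\<delta> (act b v)) [(act p x, q * y). (p, q) \<leftarrow> xs, (x, y) \<leftarrow> \<delta> v])
   \<comment> \<open>pre-Hilbert space\<close>
   \<and> (\<forall>v w w'. ip v (w + w') = ip v w + ip v w')
   \<and> (\<forall>c v w. ip v (scV c w) = c * ip v w)
   \<and> (\<forall>v w. ip w v = cnj (ip v w))
   \<and> (\<forall>v. Re (ip v v) \<ge> 0 \<and> (ip v v = 0 \<longrightarrow> v = 0))
   \<comment> \<open>unitarity conditions\<close>
   \<and> (\<forall>b\<in>B. \<forall>v w. ip v (act b w) = ip (act (st b) v) w)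
   \<and> (\<forall>v w. sum_list (map (\<lambda>(x, y). sc (ip v x) y) (\<delta> w))
          - sum_list (map (\<lambda>(x, y). sc (ip x w) (st (S y))) (\<delta> v)) \<in> J))"

end

theory Submission
  imports Defs
begin

lemma sep:
  fixes sc :: "complex \<Rightarrow> 'v::ab_group_add \<Rightarrow> 'v"
  assumes "cvec sc" "x \<noteq> 0" shows "\<exists>f. linf sc f \<and> f x = 1"
proof -
  interpret V: vector_space sc using assms(1) unfolding cvec_def by unfold_locales auto
  interpret P: vector_space_pair sc "(*)::complex\<Rightarrow>complex\<Rightarrow>complex"
    using assms(1) unfolding cvec_def by unfold_locales (auto simp: algebra_simps)
  have "V.independent {x}" using V.independent_insert[of x "{}"] assms(2) by simp
  from P.linear_independent_extend[OF this, of "\<lambda>_. 1"] obtain g where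
    "Vector_Spaces.linear sc (*) g" "g x = 1" by auto
  then show ?thesis unfolding Vector_Spaces.linear_iff linf_def by blast
qed

definition vs :: "('v \<Rightarrow> 'w \<Rightarrow> 'b::comm_monoid_add) \<Rightarrow> ('v \<times> 'w) list \<Rightarrow> 'b" where
  "vs F L = sum_list (map (\<lambda>(p, q). F p q) L)"

lemma vs_Nil[simp]: "vs F [] = 0" by (simp add: vs_def)
lemma vs_Cons[simp]: "vs F ((p, q) # L) = F p q + vs F L" by (simp add: vs_def)
lemma vs_append[simp]: "vs F (L @ M) = vs F L + vs F M" by (simp add: vs_def)
lemma vs_add: "vs (\<lambda>p q. F p q + G p q) L = vs F L + vs G L"
  by (induction L) (auto simp: algebra_simps)
lemma vs_zero[simp]: "vs (\<lambda>p q. 0) L = 0" by (induction L) auto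
lemma vs_diff: "vs (\<lambda>p q. F p q - G p q) L = vs F L - (vs G L :: 'b::ab_group_add)"
  by (induction L) (auto simp: algebra_simps)
lemma vs_cong: "(\<And>p q. (p, q) \<in> set L \<Longrightarrow> F p q = G p q) \<Longrightarrow> vs F L = vs G L"
  by (induction L) auto
lemma vs_map: "vs F (map (\<lambda>(p, q). (f p, g q)) L) = vs (\<lambda>p q. F (f p) (g q)) L"
  by (induction L) auto
lemma vs_swap: "vs (\<lambda>p q. vs (\<lambda>r s. H p q r s) M) L = vs (\<lambda>r s. vs (\<lambda>p q. H p q r s) L) M"
proof (induction L)
  case Nil then show ?case by (simp add: vs_zero)
next
  case (Cons a L) then show ?case by (cases a) (simp add: vs_add)
qed
lemma additive_zero: "(\<forall>x y. h (x + y) = h x + (h y :: 'c::ab_group_add)) \<Longrightarrow> h (0::'a::monoid_add) = 0"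
proof -
  assume a: "\<forall>x y. h (x + y) = h x + (h y :: 'c::ab_group_add)"
  have "h (0::'a) = h (0 + 0)" by simp
  also have "\<dots> = h 0 + h 0" using a by blast
  finally have "h 0 + h 0 = h 0 + 0" by simp
  then show "h 0 = 0" by (simp only: add_left_cancel)
qed
lemma vs_comp: assumes "\<forall>x y. h (x + y) = h x + (h y :: 'c::ab_group_add)"
  shows "h (vs F L) = vs (\<lambda>p q. h (F p q)) L"
proof (induction L)
  case Nil then show ?case using additive_zero[OF assms] by simp
next
  case (Cons a L) then show ?case using assms by (cases a) simp
qed
lemma vs_concat: "vs F [(f p p', g q q'). (p, q) \<leftarrow> xs, (p', q') \<leftarrow> ys]
   = vs (\<lambda>p q. vs (\<lambda>p' q'. F (f p p') (g q q')) ys) xs"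
proof (induction xs)
  case Nil then show ?case by simp
next
  case (Cons a xs)
  have "vs F (map (\<lambda>(p', q'). (f p p', g q q')) ys) = vs (\<lambda>p' q'. F (f p p') (g q q')) ys" for p q
    by (induction ys) auto
  with Cons show ?case by (cases a) simp
qed
lemma tsum_vs: "tsum \<beta> L = vs \<beta> L" by (simp add: tsum_def vs_def)

lemma additive_diff:
  assumes "\<forall>x y. h (x + y) = h x + (h y :: 'c::ab_group_add)"
  shows "h (a - b :: 'a::ab_group_add) = h a - h b"
proof -
  have "h a = h ((a - b) + b)" by simp
  also have "\<dots> = h (a - b) + h b" using assms by blast
  finally show ?thesis by (simp add: algebra_simps)
qed

lemma additive_neg:
  assumes "\<forall>x y. h (x + y) = h x + (h y :: 'c::ab_group_add)"
  shows "h (- a :: 'a::ab_group_add) = - h a"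
  using additive_diff[OF assms, of 0 a] additive_zero[OF assms] by simp

locale cqg =
  fixes sc :: "complex \<Rightarrow> 'a::ring_1 \<Rightarrow> 'a"
    and \<Delta> :: "'a \<Rightarrow> ('a \<times> 'a) list" and \<epsilon> :: "'a \<Rightarrow> complex"
    and S st :: "'a \<Rightarrow> 'a" and \<Phi> :: "'a \<Rightarrow> complex"
  assumes H: "cqg_hopf sc \<Delta> \<epsilon> S st \<Phi>"
begin

lemma cvec: "cvec sc" using H unfolding cqg_hopf_def calg_def by (elim conjE) ((erule allE)+)?
lemma calg: "calg sc" using H unfolding cqg_hopf_def by (elim conjE) ((erule allE)+)?
lemma sc_add[simp]: "sc c (x + y) = sc c x + sc c y" using cvec unfolding cvec_def by blast
lemma sc_add2: "sc (c + d) x = sc c x + sc d x" using cvec unfolding cvec_def by blast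
lemma sc_sc[simp]: "sc c (sc d x) = sc (c * d) x" using cvec unfolding cvec_def by blast
lemma sc_one[simp]: "sc 1 x = x" using cvec unfolding cvec_def by blast
lemma sc_mul1: "sc c a * b = sc c (a * b)" using calg unfolding calg_def by metis
lemma sc_mul2: "a * sc c b = sc c (a * b)" using calg unfolding calg_def by metis

sublocale V: vector_space sc
  by unfold_locales (auto simp: sc_add2)

lemma sc_zero1[simp]: "sc 0 x = 0" by (rule V.scale_zero_left)
lemma sc_zero2[simp]: "sc c 0 = 0" by (rule V.scale_zero_right)

lemma D_add: "teq sc sc (\<Delta> (x + y)) (\<Delta> x @ \<Delta> y)" using H unfolding cqg_hopf_def by (elim conjE) (erule allE)+
lemma D_sc: "teq sc sc (\<Delta> (sc c x)) (map (\<lambda>(p, q). (sc c p, q)) (\<Delta> x))"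
  using H unfolding cqg_hopf_def by (elim conjE) (erule allE)+
lemma D_mul: "teq sc sc (\<Delta> (x * y)) [(p * p', q * q'). (p, q) \<leftarrow> \<Delta> x, (p', q') \<leftarrow> \<Delta> y]"
  using H unfolding cqg_hopf_def by (elim conjE) ((erule allE)+)?
lemma coassoc: "trilin sc sc sc \<gamma> \<Longrightarrow>
        sum_list (map (\<lambda>(p, q). sum_list (map (\<lambda>(r, s). \<gamma> r s q) (\<Delta> p))) (\<Delta> a))
      = sum_list (map (\<lambda>(p, q). sum_list (map (\<lambda>(r, s). \<gamma> p r s) (\<Delta> q))) (\<Delta> a))"
  using H unfolding cqg_hopf_def by (elim conjE) ((erule allE)+, erule impE, assumption)
lemma eps_add[simp]: "\<epsilon> (x + y) = \<epsilon> x + \<epsilon> y" using H unfolding cqg_hopf_def linf_def by (elim conjE) ((erule allE)+)?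
lemma eps_sc[simp]: "\<epsilon> (sc c x) = c * \<epsilon> x" using H unfolding cqg_hopf_def linf_def by (elim conjE) ((erule allE)+)?
lemma eps_mul[simp]: "\<epsilon> (x * y) = \<epsilon> x * \<epsilon> y" using H unfolding cqg_hopf_def by (elim conjE) ((erule allE)+)?
lemma eps_one[simp]: "\<epsilon> 1 = 1" using H unfolding cqg_hopf_def by (elim conjE) ((erule allE)+)?
lemma CL: "vs (\<lambda>p q. sc (\<epsilon> p) q) (\<Delta> a) = a" using H unfolding cqg_hopf_def vs_def by (elim conjE) ((erule allE)+)?
lemma CR: "vs (\<lambda>p q. sc (\<epsilon> q) p) (\<Delta> a) = a" using H unfolding cqg_hopf_def vs_def by (elim conjE) ((erule allE)+)?
lemma S_add[simp]: "S (x + y) = S x + S y" using H unfolding cqg_hopf_def linmap_def by (elim conjE) ((erule allE)+)?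
lemma S_sc[simp]: "S (sc c x) = sc c (S x)" using H unfolding cqg_hopf_def linmap_def by (elim conjE) ((erule allE)+)?
lemma SL: "vs (\<lambda>p q. S p * q) (\<Delta> a) = sc (\<epsilon> a) 1" using H unfolding cqg_hopf_def vs_def by (elim conjE) ((erule allE)+)?
lemma SR: "vs (\<lambda>p q. p * S q) (\<Delta> a) = sc (\<epsilon> a) 1" using H unfolding cqg_hopf_def vs_def by (elim conjE) ((erule allE)+)?
lemma st_add[simp]: "st (x + y) = st x + st y" using H unfolding cqg_hopf_def by (elim conjE) ((erule allE)+)?
lemma st_sc[simp]: "st (sc c x) = sc (cnj c) (st x)" using H unfolding cqg_hopf_def by (elim conjE) ((erule allE)+)?
lemma st_st[simp]: "st (st x) = x" using H unfolding cqg_hopf_def by (elim conjE) ((erule allE)+)?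
lemma st_mul[simp]: "st (x * y) = st y * st x" using H unfolding cqg_hopf_def by (elim conjE) ((erule allE)+)?
lemma D_st: "teq sc sc (\<Delta> (st a)) (map (\<lambda>(p, q). (st p, st q)) (\<Delta> a))"
  using H unfolding cqg_hopf_def by (elim conjE) ((erule allE)+)?
lemma Phi_add[simp]: "\<Phi> (x + y) = \<Phi> x + \<Phi> y" using H unfolding cqg_hopf_def linf_def by (elim conjE) ((erule allE)+)?
lemma Phi_sc[simp]: "\<Phi> (sc c x) = c * \<Phi> x" using H unfolding cqg_hopf_def linf_def by (elim conjE) ((erule allE)+)?
lemma Phi_one[simp]: "\<Phi> 1 = 1" using H unfolding cqg_hopf_def by (elim conjE) ((erule allE)+)?
lemma Phi_pos: "Im (\<Phi> (st a * a)) = 0 \<and> Re (\<Phi> (st a * a)) \<ge> 0" using H unfolding cqg_hopf_def by (elim conjE) ((erule allE)+)?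
lemma IL: "vs (\<lambda>p q. sc (\<Phi> p) q) (\<Delta> a) = sc (\<Phi> a) 1" using H unfolding cqg_hopf_def vs_def by (elim conjE) ((erule allE)+)?
lemma IR: "vs (\<lambda>p q. sc (\<Phi> q) p) (\<Delta> a) = sc (\<Phi> a) 1" using H unfolding cqg_hopf_def vs_def by (elim conjE) ((erule allE)+)?

lemma addf_eps: "\<forall>x y. \<epsilon> (x + y) = \<epsilon> x + \<epsilon> y" by simp
lemma addf_Phi: "\<forall>x y. \<Phi> (x + y) = \<Phi> x + \<Phi> y" by simp
lemma addf_S: "\<forall>x y. S (x + y) = S x + S y" by simp
lemma addf_st: "\<forall>x y. st (x + y) = st x + st y" by simp
lemma addf_sc: "\<forall>x y. sc c (x + y) = sc c x + sc c y" by simp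
lemma addf_ml: "\<forall>x y. (a::'a) * (x + y) = a * x + a * y" by (simp add: distrib_left)
lemma addf_mr: "\<forall>x y. (x + y) * (a::'a) = x * a + y * a" by (simp add: distrib_right)

lemma eps_zero[simp]: "\<epsilon> 0 = 0" by (rule additive_zero[OF addf_eps])
lemma Phi_zero[simp]: "\<Phi> 0 = 0" by (rule additive_zero[OF addf_Phi])
lemma S_zero[simp]: "S 0 = 0" by (rule additive_zero[OF addf_S])
lemma st_zero[simp]: "st 0 = 0" by (rule additive_zero[OF addf_st])
lemma eps_diff[simp]: "\<epsilon> (x - y) = \<epsilon> x - \<epsilon> y" by (rule additive_diff[OF addf_eps])
lemma Phi_diff[simp]: "\<Phi> (x - y) = \<Phi> x - \<Phi> y" by (rule additive_diff[OF addf_Phi])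
lemma S_diff[simp]: "S (x - y) = S x - S y" by (rule additive_diff[OF addf_S])
lemma st_diff[simp]: "st (x - y) = st x - st y" by (rule additive_diff[OF addf_st])
lemma sc_diff[simp]: "sc c (x - y) = sc c x - sc c y" by (rule additive_diff[OF addf_sc])
lemma st_one[simp]: "st 1 = 1"
proof -
  have "st 1 = st 1 * st (st 1)" by (simp only: st_st mult_1_right)
  also have "\<dots> = st (st 1 * 1)" by (simp only: st_mul)
  also have "\<dots> = 1" by (simp only: st_st mult_1_right)
  finally show ?thesis .
qed

lemma eps_vs: "\<epsilon> (vs F L) = vs (\<lambda>p q. \<epsilon> (F p q)) L" by (rule vs_comp[OF addf_eps])
lemma Phi_vs: "\<Phi> (vs F L) = vs (\<lambda>p q. \<Phi> (F p q)) L" by (rule vs_comp[OF addf_Phi])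
lemma st_vs: "st (vs F L) = vs (\<lambda>p q. st (F p q)) L" by (rule vs_comp[OF addf_st])
lemma sc_vs: "sc c (vs F L) = vs (\<lambda>p q. sc c (F p q)) L" by (rule vs_comp[OF addf_sc])
lemma ml_vs: "(a::'a) * vs F L = vs (\<lambda>p q. a * F p q) L" by (rule vs_comp[OF addf_ml])
lemma mr_vs: "vs F L * (a::'a) = vs (\<lambda>p q. F p q * a) L" by (rule vs_comp[OF addf_mr])
lemma cvs: "c * vs F L = vs (\<lambda>p q. c * (F p q :: complex)) L"
  by (rule vs_comp) (simp add: distrib_left)

lemma sep_eq: assumes "\<And>f. linf sc f \<Longrightarrow> f x = f y" shows "x = y"
proof (rule ccontr)
  assume "x \<noteq> y"
  then have "x - y \<noteq> 0" by simp
  from sep[OF cvec this] obtain f where f: "linf sc f" "f (x - y) = 1" by blast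
  have "\<forall>x y. f (x + y) = f x + f y" using f(1) unfolding linf_def by blast
  from additive_diff[OF this] f assms[OF f(1)] show False by simp
qed

definition blv :: "('a \<Rightarrow> 'a \<Rightarrow> 'a) \<Rightarrow> bool" where
  "blv F \<longleftrightarrow> (\<forall>y. linmap sc sc (\<lambda>x. F x y)) \<and> (\<forall>x. linmap sc sc (\<lambda>y. F x y))"
definition tlv :: "('a \<Rightarrow> 'a \<Rightarrow> 'a \<Rightarrow> 'a) \<Rightarrow> bool" where
  "tlv G \<longleftrightarrow> (\<forall>y z. linmap sc sc (\<lambda>x. G x y z)) \<and> (\<forall>x z. linmap sc sc (\<lambda>y. G x y z))
     \<and> (\<forall>x y. linmap sc sc (\<lambda>z. G x y z))"

lemma teq_vs: assumes "teq sc sc xs ys" "blv F" shows "vs F xs = vs F ys"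
proof (rule sep_eq)
  fix f assume f: "linf sc f"
  have fa: "\<forall>x y. f (x + y) = f x + f y" using f unfolding linf_def by blast
  have "bilin sc sc (\<lambda>p q. f (F p q))" using assms(2) f
    unfolding bilin_def linf_def blv_def linmap_def by auto
  then have "tsum (\<lambda>p q. f (F p q)) xs = tsum (\<lambda>p q. f (F p q)) ys"
    using assms(1) unfolding teq_def by blast
  then show "f (vs F xs) = f (vs F ys)" by (simp add: vs_comp[OF fa] tsum_vs)
qed

lemma coassoc_v: assumes "tlv G"
  shows "vs (\<lambda>p q. vs (\<lambda>r s. G r s q) (\<Delta> p)) (\<Delta> a) = vs (\<lambda>p q. vs (\<lambda>r s. G p r s) (\<Delta> q)) (\<Delta> a)"
proof (rule sep_eq)
  fix f assume f: "linf sc f"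
  have fa: "\<forall>x y. f (x + y) = f x + f y" using f unfolding linf_def by blast
  have "trilin sc sc sc (\<lambda>r s q. f (G r s q))" using assms f
    unfolding trilin_def linf_def tlv_def linmap_def by auto
  from coassoc[OF this, of a]
  have "vs (\<lambda>p q. vs (\<lambda>r s. f (G r s q)) (\<Delta> p)) (\<Delta> a) = vs (\<lambda>p q. vs (\<lambda>r s. f (G p r s)) (\<Delta> q)) (\<Delta> a)"
    by (simp only: vs_def)
  then show "f (vs (\<lambda>p q. vs (\<lambda>r s. G r s q) (\<Delta> p)) (\<Delta> a)) =
      f (vs (\<lambda>p q. vs (\<lambda>r s. G p r s) (\<Delta> q)) (\<Delta> a))"
    by (simp only: vs_comp[OF fa])
qed

lemma mul_vs: assumes "blv F"
  shows "vs F (\<Delta> (x * y)) = vs (\<lambda>p q. vs (\<lambda>p' q'. F (p * p') (q * q')) (\<Delta> y)) (\<Delta> x)"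
  using teq_vs[OF D_mul assms] by (simp add: vs_concat)


lemmas lsimps = linmap_def blv_def tlv_def sc_add2 sc_mul1 sc_mul2 distrib_left distrib_right

lemma vs_scl: "vs (\<lambda>p q. sc (g p q) x) L = sc (vs g L) x"
  by (induction L) (auto simp: sc_add2)

lemma lin_vs: "(\<And>p q. linmap sc sc (\<lambda>x. F x p q)) \<Longrightarrow> linmap sc sc (\<lambda>x. vs (F x) L)"
proof (induction L)
  case Nil then show ?case by (simp add: linmap_def)
next
  case (Cons a L)
  then show ?case by (cases a) (simp add: linmap_def)
qed

definition T where "T x = st (S (st x))"
lemma T_add[simp]: "T (x + y) = T x + T y" by (simp add: T_def)
lemma T_sc[simp]: "T (sc c x) = sc c (T x)" by (simp add: T_def)
lemma T_zero[simp]: "T 0 = 0" by (simp add: T_def)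
lemma T_st: "T (st x) = st (S x)" by (simp add: T_def)

lemma eps_st: "\<epsilon> (st y) = cnj (\<epsilon> y)"
proof -
  have b: "blv (\<lambda>p q. sc (\<epsilon> p) q)" by (simp add: lsimps)
  have "st y = vs (\<lambda>p q. sc (\<epsilon> p) q) (\<Delta> (st y))" by (rule CL[symmetric])
  also have "\<dots> = vs (\<lambda>p q. sc (\<epsilon> p) q) (map (\<lambda>(p, q). (st p, st q)) (\<Delta> y))"
    by (rule teq_vs[OF D_st b])
  also have "\<dots> = vs (\<lambda>p q. sc (\<epsilon> (st p)) (st q)) (\<Delta> y)" by (rule vs_map)
  finally have "st (st y) = st (vs (\<lambda>p q. sc (\<epsilon> (st p)) (st q)) (\<Delta> y))" by simp
  then have y1: "y = vs (\<lambda>p q. sc (cnj (\<epsilon> (st p))) q) (\<Delta> y)" by (simp add: st_vs)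
  define e' where "e' x = cnj (\<epsilon> (st x))" for x
  have ea: "\<forall>x z. e' (x + z) = e' x + e' z" by (simp add: e'_def)
  have es: "e' (sc c x) = c * e' x" for c x by (simp add: e'_def)
  have "e' y = e' (vs (\<lambda>p q. sc (\<epsilon> q) p) (\<Delta> y))" by (simp add: CR)
  also have "\<dots> = vs (\<lambda>p q. \<epsilon> q * e' p) (\<Delta> y)" by (simp add: vs_comp[OF ea] es)
  finally have 1: "e' y = vs (\<lambda>p q. \<epsilon> q * e' p) (\<Delta> y)" .
  have "\<epsilon> y = \<epsilon> (vs (\<lambda>p q. sc (e' p) q) (\<Delta> y))" using y1 by (simp add: e'_def)
  also have "\<dots> = vs (\<lambda>p q. e' p * \<epsilon> q) (\<Delta> y)" by (simp add: eps_vs)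
  finally have "\<epsilon> y = e' y" using 1 by (simp add: mult.commute)
  then show ?thesis by (simp add: e'_def)
qed

lemma ST: "vs (\<lambda>p q. T q * p) (\<Delta> y) = sc (\<epsilon> y) 1"
proof -
  have b: "blv (\<lambda>p q. p * S q)" by (simp add: lsimps)
  have "vs (\<lambda>p q. T q * p) (\<Delta> y) = vs (\<lambda>p q. st (st p * S (st q))) (\<Delta> y)"
    by (simp add: T_def)
  also have "\<dots> = st (vs (\<lambda>p q. st p * S (st q)) (\<Delta> y))" by (simp add: st_vs)
  also have "vs (\<lambda>p q. st p * S (st q)) (\<Delta> y) = vs (\<lambda>p q. p * S q) (map (\<lambda>(p, q). (st p, st q)) (\<Delta> y))"
    by (simp add: vs_map)
  also have "\<dots> = vs (\<lambda>p q. p * S q) (\<Delta> (st y))" by (rule teq_vs[OF D_st b, symmetric])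
  also have "\<dots> = sc (\<epsilon> (st y)) 1" by (rule SR)
  finally show ?thesis by (simp add: eps_st)
qed

lemma ID: "vs (\<lambda>p q. sc (\<Phi> (a * p)) q) (\<Delta> w) = vs (\<lambda>p q. sc (\<Phi> (p * w)) (T q)) (\<Delta> a)"
proof -
  have "vs (\<lambda>p q. sc (\<Phi> (p * w)) (T q)) (\<Delta> a) = vs (\<lambda>p q. T q * vs (\<lambda>r s. sc (\<Phi> r) s) (\<Delta> (p * w))) (\<Delta> a)"
    by (simp add: IL sc_mul2)
  also have "\<dots> = vs (\<lambda>p q. vs (\<lambda>r s. vs (\<lambda>r' s'. T q * sc (\<Phi> (r * r')) (s * s')) (\<Delta> w)) (\<Delta> p)) (\<Delta> a)"
  proof (rule vs_cong)
    fix p q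
    have b: "blv (\<lambda>r s. T q * sc (\<Phi> r) s)" by (simp add: lsimps)
    show "T q * vs (\<lambda>r s. sc (\<Phi> r) s) (\<Delta> (p * w)) = vs (\<lambda>r s. vs (\<lambda>r' s'. T q * sc (\<Phi> (r * r')) (s * s')) (\<Delta> w)) (\<Delta> p)"
      by (simp only: ml_vs mul_vs[OF b])
  qed
  also have "\<dots> = vs (\<lambda>p q. vs (\<lambda>r s. vs (\<lambda>r' s'. T s * sc (\<Phi> (p * r')) (r * s')) (\<Delta> w)) (\<Delta> q)) (\<Delta> a)"
  proof (rule coassoc_v[where G = "\<lambda>r s q. vs (\<lambda>r' s'. T q * sc (\<Phi> (r * r')) (s * s')) (\<Delta> w)"])
    show "tlv (\<lambda>r s q. vs (\<lambda>r' s'. T q * sc (\<Phi> (r * r')) (s * s')) (\<Delta> w))"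
      unfolding tlv_def by (intro conjI allI lin_vs) (simp_all add: lsimps)
  qed
  also have "\<dots> = vs (\<lambda>p q. vs (\<lambda>r' s'. sc (\<Phi> (p * r')) (vs (\<lambda>r s. T s * r) (\<Delta> q) * s')) (\<Delta> w)) (\<Delta> a)"
    by (simp add: vs_swap[of _ "\<Delta> w"] mr_vs sc_vs sc_mul1 sc_mul2 mult.assoc)
  also have "\<dots> = vs (\<lambda>p q. vs (\<lambda>r' s'. sc (\<Phi> (p * r') * \<epsilon> q) s') (\<Delta> w)) (\<Delta> a)"
    by (simp add: ST sc_mul1 mult.commute)
  also have "\<dots> = vs (\<lambda>r' s'. vs (\<lambda>p q. sc (\<Phi> (p * r') * \<epsilon> q) s') (\<Delta> a)) (\<Delta> w)"
    by (rule vs_swap)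
  also have "\<dots> = vs (\<lambda>r' s'. sc (\<Phi> (a * r')) s') (\<Delta> w)"
  proof (rule vs_cong)
    fix r' s'
    have "\<Phi> (a * r') = \<Phi> (vs (\<lambda>p q. sc (\<epsilon> q) p) (\<Delta> a) * r')" by (simp add: CR)
    also have "\<dots> = vs (\<lambda>p q. \<Phi> (p * r') * \<epsilon> q) (\<Delta> a)"
      by (simp add: mr_vs Phi_vs sc_mul1 mult.commute)
    finally show "vs (\<lambda>p q. sc (\<Phi> (p * r') * \<epsilon> q) s') (\<Delta> a) = sc (\<Phi> (a * r')) s'"
      by (simp add: vs_scl)
  qed
  finally show ?thesis by simp
qed


end

context cqg begin

lemma herm: "\<Phi> (st y * x) = cnj (\<Phi> (st x * y))"
proof -
  define a where "a = \<Phi> (st x * y)"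
  define b where "b = \<Phi> (st y * x)"
  have e1: "\<Phi> (st (x + y) * (x + y)) = \<Phi> (st x * x) + a + b + \<Phi> (st y * y)"
    by (simp add: distrib_left distrib_right a_def b_def)
  have e2: "\<Phi> (st (x + sc \<i> y) * (x + sc \<i> y)) = \<Phi> (st x * x) + \<i> * a - \<i> * b + \<Phi> (st y * y)"
  proof -
    have "\<Phi> (st (x + sc \<i> y) * (x + sc \<i> y)) = \<Phi> (st x * x) + \<i> * a - \<i> * b - (\<i> * \<i>) * \<Phi> (st y * y)"
      by (simp add: distrib_left distrib_right left_diff_distrib right_diff_distrib sc_mul1 sc_mul2 a_def b_def)
    then show ?thesis by simp
  qed
  have "Im (\<Phi> (st (x + y) * (x + y))) = 0" "Im (\<Phi> (st (x + sc \<i> y) * (x + sc \<i> y))) = 0"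
    "Im (\<Phi> (st x * x)) = 0" "Im (\<Phi> (st y * y)) = 0" using Phi_pos by blast+
  with e1 e2 have "Im b = - Im a" "Re b = Re a" by simp_all
  then show ?thesis by (simp add: complex_eq_iff a_def[symmetric] b_def[symmetric])
qed

lemma CS: assumes "\<Phi> (st v * v) = 0" shows "\<Phi> (st x * v) = 0"
proof -
  define c where "c = \<Phi> (st x * v)"
  define r where "r = \<Phi> (st x * x)"
  define k where "k = 1 / (1 + Re r)"
  have r: "Im r = 0" "Re r \<ge> 0" using Phi_pos unfolding r_def by blast+
  have k: "k > 0" "k * Re r < 1" using r unfolding k_def by (auto simp: field_simps)
  define t where "t = complex_of_real (- k) * c"
  have F1: "\<Phi> (st (v + sc t x) * (v + sc t x)) = t * cnj c + cnj t * c + cnj t * t * r"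
    by (simp add: distrib_left distrib_right sc_mul1 sc_mul2 assms c_def r_def herm[of v x])
  have F2: "Re (t * cnj c + cnj t * c + cnj t * t * r) = k * ((Re c)\<^sup>2 + (Im c)\<^sup>2) * (k * Re r - 2)"
    using r by (simp add: t_def power2_eq_square) (simp add: algebra_simps)
  have F3: "Re (\<Phi> (st (v + sc t x) * (v + sc t x))) \<ge> 0" using Phi_pos[of "v + sc t x"] by blast
  have "k * ((Re c)\<^sup>2 + (Im c)\<^sup>2) * (k * Re r - 2) \<ge> 0" using F3 unfolding F1 F2 .
  moreover have "k * Re r - 2 < 0" using k by simp
  ultimately have "k * ((Re c)\<^sup>2 + (Im c)\<^sup>2) \<le> 0" by (auto simp: zero_le_mult_iff)
  with k have "(Re c)\<^sup>2 + (Im c)\<^sup>2 \<le> 0" by (simp add: mult_le_0_iff)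
  then have "Re c = 0" "Im c = 0" by (simp_all add: sum_power2_le_zero_iff)
  then show ?thesis by (simp add: c_def complex_eq_iff)
qed



lemma vs_map2: "vs F (map (\<lambda>(p, q). (p, g q)) L) = vs (\<lambda>p q. F p (g q)) L"
  by (induction L) auto

lemma FD: "(\<forall>x. vs (\<lambda>p q. sc (\<Phi> (x * p)) q) L = 0) \<Longrightarrow> linmap sc sc M \<Longrightarrow> vs (\<lambda>p q. \<Phi> (M q * p)) L = 0"
proof (induction "length L" arbitrary: L rule: less_induct)
  case less
  note hyp = less.prems(1) and M = less.prems(2)
  have Ma: "\<forall>x y. M (x + y) = M x + M y" and Ms: "\<And>c x. M (sc c x) = sc c (M x)"
    using M unfolding linmap_def by blast+
  have M0: "M 0 = 0" by (rule additive_zero[OF Ma])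
  have Md: "M (x - y) = M x - M y" for x y by (rule additive_diff[OF Ma])
  show ?case
  proof (cases L)
    case Nil then show ?thesis by simp
  next
    case (Cons h L')
    obtain p1 q1 where h: "h = (p1, q1)" by (cases h)
    show ?thesis
    proof (cases "q1 = 0")
      case True
      have "\<forall>x. vs (\<lambda>p q. sc (\<Phi> (x * p)) q) L' = 0" using hyp by (simp add: Cons h True)
      then have "vs (\<lambda>p q. \<Phi> (M q * p)) L' = 0" using less.hyps[of L'] M by (simp add: Cons)
      then show ?thesis by (simp add: Cons h True M0)
    next
      case False
      obtain \<omega> where \<omega>: "linf sc \<omega>" "\<omega> q1 = 1" using sep[OF cvec False] by blast
      have oa: "\<forall>x y. \<omega> (x + y) = \<omega> x + \<omega> y" and os: "\<And>c x. \<omega> (sc c x) = c * \<omega> x"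
        using \<omega>(1) unfolding linf_def by blast+
      have o0: "\<omega> 0 = 0" by (rule additive_zero[OF oa])
      define P' where "P' = vs (\<lambda>p q. sc (\<omega> q) p) L'"
      have PP: "\<Phi> (x * P') = vs (\<lambda>p q. \<omega> q * \<Phi> (x * p)) L'" for x
        by (simp add: P'_def ml_vs Phi_vs sc_mul2)
      have hP: "\<Phi> (x * p1) + \<Phi> (x * P') = 0" for x
      proof -
        have "\<omega> (vs (\<lambda>p q. sc (\<Phi> (x * p)) q) L) = 0" using hyp o0 by simp
        then have "\<Phi> (x * p1) * \<omega> q1 + vs (\<lambda>p q. \<Phi> (x * p) * \<omega> q) L' = 0"
          by (simp add: vs_comp[OF oa] oa os Cons h)
        then show ?thesis using \<omega>(2) by (simp add: PP mult.commute)
      qed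
      define g where "g q = q - sc (\<omega> q) q1" for q
      define L2 where "L2 = map (\<lambda>(p, q). (p, g q)) L'"
      have "vs (\<lambda>p q. sc (\<Phi> (x * p)) q) L2 = 0" for x
      proof -
        have "vs (\<lambda>p q. sc (\<Phi> (x * p)) q) L2 = vs (\<lambda>p q. sc (\<Phi> (x * p)) q) L' - vs (\<lambda>p q. sc (\<Phi> (x * p)) (sc (\<omega> q) q1)) L'"
          by (simp add: L2_def vs_map2 g_def vs_diff)
        also have "vs (\<lambda>p q. sc (\<Phi> (x * p)) (sc (\<omega> q) q1)) L' = vs (\<lambda>p q. sc (\<omega> q * \<Phi> (x * p)) q1) L'"
          by (simp add: mult.commute)
        also have "\<dots> = sc (\<Phi> (x * P')) q1" by (simp add: vs_scl PP)
        also have "vs (\<lambda>p q. sc (\<Phi> (x * p)) q) L' = - sc (\<Phi> (x * p1)) q1"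
          using hyp[rule_format, of x] by (simp add: Cons h eq_neg_iff_add_eq_0 add.commute)
        finally have "vs (\<lambda>p q. sc (\<Phi> (x * p)) q) L2 = - (sc (\<Phi> (x * p1)) q1 + sc (\<Phi> (x * P')) q1)"
          by simp
        also have "\<dots> = - sc (\<Phi> (x * p1) + \<Phi> (x * P')) q1" by (simp add: sc_add2)
        finally show ?thesis using hP[of x] by simp
      qed
      then have "vs (\<lambda>p q. \<Phi> (M q * p)) L2 = 0" using less.hyps[of L2] M by (simp add: L2_def Cons)
      then have "vs (\<lambda>p q. \<Phi> (M q * p) - \<omega> q * \<Phi> (M q1 * p)) L' = 0"
        by (simp add: L2_def vs_map2 g_def Md Ms sc_mul1 left_diff_distrib)
      then have "vs (\<lambda>p q. \<Phi> (M q * p)) L' = vs (\<lambda>p q. \<omega> q * \<Phi> (M q1 * p)) L'"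
        by (simp add: vs_diff)
      then show ?thesis using hP[of "M q1"] \<omega>(2) by (simp add: Cons h PP)
    qed
  qed
qed


lemma faithful: assumes z: "\<Phi> (st v * v) = 0" shows "v = 0"
proof (rule ccontr)
  assume nz: "v \<noteq> 0"
  have Nb: "vs (\<lambda>p q. sc (\<Phi> (x * p)) q) (\<Delta> u) = 0" if "\<forall>y. \<Phi> (y * u) = 0" for u x
    using that by (simp add: ID)
  have linT: "linmap sc sc T" by (simp add: linmap_def)
  have Nd: "\<epsilon> u = 0" if "\<forall>y. \<Phi> (y * u) = 0" for u
  proof -
    have "\<epsilon> u = \<Phi> (sc (\<epsilon> u) 1)" by simp
    also have "\<dots> = \<Phi> (vs (\<lambda>p q. T q * p) (\<Delta> u))" by (simp add: ST)
    also have "\<dots> = vs (\<lambda>p q. \<Phi> (T q * p)) (\<Delta> u)" by (simp add: Phi_vs)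
    also have "\<dots> = 0" by (rule FD[OF _ linT]) (use Nb[OF that] in blast)
    finally show ?thesis .
  qed
  obtain \<omega> where \<omega>: "linf sc \<omega>" "\<omega> v = 1" using sep[OF cvec nz] by blast
  have oa: "\<forall>x y. \<omega> (x + y) = \<omega> x + \<omega> y" and os: "\<And>c x. \<omega> (sc c x) = c * \<omega> x"
    using \<omega>(1) unfolding linf_def by blast+
  have o0: "\<omega> 0 = 0" by (rule additive_zero[OF oa])
  define u where "u = vs (\<lambda>p q. sc (\<omega> q) p) (\<Delta> v)"
  have "\<Phi> (y * u) = 0" for y
  proof -
    have N: "\<forall>y. \<Phi> (y * v) = 0" using CS[OF z] by (metis st_st)
    have "\<Phi> (y * u) = vs (\<lambda>p q. \<Phi> (y * p) * \<omega> q) (\<Delta> v)"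
      by (simp add: u_def ml_vs Phi_vs sc_mul2 mult.commute)
    also have "\<dots> = \<omega> (vs (\<lambda>p q. sc (\<Phi> (y * p)) q) (\<Delta> v))" by (simp add: vs_comp[OF oa] os)
    also have "\<dots> = 0" using Nb[OF N] o0 by simp
    finally show ?thesis .
  qed
  then have "\<epsilon> u = 0" using Nd by blast
  moreover have "\<epsilon> u = \<omega> (vs (\<lambda>p q. sc (\<epsilon> p) q) (\<Delta> v))"
    by (simp add: u_def eps_vs vs_comp[OF oa] os mult.commute)
  ultimately show False using \<omega>(2) CL by simp
qed

lemma linf_vs: "(\<And>p q. linf sc (\<lambda>x. F x p q)) \<Longrightarrow> linf sc (\<lambda>x. vs (F x) L)"
proof (induction L)
  case Nil then show ?case by (simp add: linf_def)
next
  case (Cons a L)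
  then show ?case by (cases a) (simp add: linf_def distrib_left)
qed

lemma teq_prod: assumes "teq sc sc xs ys"
  shows "teq sc sc [(p * x, q * y). (p, q) \<leftarrow> xs, (x, y) \<leftarrow> zs] [(p * x, q * y). (p, q) \<leftarrow> ys, (x, y) \<leftarrow> zs]"
  unfolding teq_def
proof (intro allI impI)
  fix \<beta> assume b: "bilin sc sc \<beta>"
  have b1: "\<beta> (x + x') y = \<beta> x y + \<beta> x' y" "\<beta> (sc c x) y = c * \<beta> x y"
    and b2: "\<beta> x (y + y') = \<beta> x y + \<beta> x y'" "\<beta> x (sc c y) = c * \<beta> x y" for x x' y y' c
    using b unfolding bilin_def linf_def by blast+
  have "bilin sc sc (\<lambda>p q. vs (\<lambda>x y. \<beta> (p * x) (q * y)) zs)"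
    unfolding bilin_def
    by (intro conjI allI linf_vs) (simp_all add: linf_def b1 b2 distrib_right sc_mul1)
  then have "tsum (\<lambda>p q. vs (\<lambda>x y. \<beta> (p * x) (q * y)) zs) xs = tsum (\<lambda>p q. vs (\<lambda>x y. \<beta> (p * x) (q * y)) zs) ys"
    using assms unfolding teq_def by blast
  then show "tsum \<beta> [(p * x, q * y). (p, q) \<leftarrow> xs, (x, y) \<leftarrow> zs] = tsum \<beta> [(p * x, q * y). (p, q) \<leftarrow> ys, (x, y) \<leftarrow> zs]"
    by (simp add: tsum_vs vs_concat)
qed

lemma teq_trans: "teq sc sc a b \<Longrightarrow> teq sc sc b c \<Longrightarrow> teq sc sc a c"
  unfolding teq_def by metis

lemma teq_teqC: "teq sc sc a b \<Longrightarrow> teqC sc sc J a b"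
  unfolding teq_def teqC_def by blast

lemma unit_C: "vs (\<lambda>p q. sc (\<Phi> (st v * p)) q) (\<Delta> w) = vs (\<lambda>p q. sc (\<Phi> (st p * w)) (st (S q))) (\<Delta> v)"
proof -
  have b: "blv (\<lambda>p q. sc (\<Phi> (p * w)) (T q))" by (simp add: lsimps)
  have "vs (\<lambda>p q. sc (\<Phi> (st v * p)) q) (\<Delta> w) = vs (\<lambda>p q. sc (\<Phi> (p * w)) (T q)) (\<Delta> (st v))"
    by (rule ID)
  also have "\<dots> = vs (\<lambda>p q. sc (\<Phi> (p * w)) (T q)) (map (\<lambda>(p, q). (st p, st q)) (\<Delta> v))"
    by (rule teq_vs[OF D_st b])
  also have "\<dots> = vs (\<lambda>p q. sc (\<Phi> (st p * w)) (st (S q))) (\<Delta> v)" by (simp add: vs_map T_st)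
  finally show ?thesis .
qed

lemma main: "DK_rep sc \<Delta> \<epsilon> S st B sc (\<lambda>b a. b * a) \<Delta> (\<lambda>a a'. \<Phi> (st a * a'))"
  unfolding DK_rep_def Let_def
proof (intro conjI)
  show "cvec sc" by (rule cvec)
  show "\<forall>b\<in>B. linmap sc sc (\<lambda>a. b * a)" by (simp add: linmap_def distrib_left sc_mul2)
  show "\<forall>b\<in>B. \<forall>b'\<in>B. \<forall>v. (b + b') * v = b * v + b' * v \<and> b * b' * v = b * (b' * v)"
    by (simp add: distrib_right mult.assoc)
  show "\<forall>c. \<forall>b\<in>B. \<forall>v. sc c b * v = sc c (b * v)" by (simp add: sc_mul1)
  show "\<forall>v::'a. 1 * v = v" by simp
  show "\<forall>v w. teqC sc sc (ABplus \<epsilon> B) (\<Delta> (v + w)) (\<Delta> v @ \<Delta> w)"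
    by (intro allI teq_teqC D_add)
  show "\<forall>c v. teqC sc sc (ABplus \<epsilon> B) (\<Delta> (sc c v)) (map (\<lambda>(x, y). (sc c x, y)) (\<Delta> v))"
    by (intro allI teq_teqC D_sc)
  show "\<forall>v. (\<Sum>(x, y)\<leftarrow>\<Delta> v. sc (\<epsilon> y) x) = v" using CR by (simp add: vs_def)
  show "\<forall>\<gamma> v. trilin sc sc sc \<gamma> \<and> (\<forall>x y z. y \<in> ABplus \<epsilon> B \<longrightarrow> \<gamma> x y z = 0) \<and>
          (\<forall>x y z. z \<in> ABplus \<epsilon> B \<longrightarrow> \<gamma> x y z = 0) \<longrightarrow>
          (\<Sum>(x, y)\<leftarrow>\<Delta> v. \<Sum>(x', y')\<leftarrow>\<Delta> x. \<gamma> x' y' y) =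
          (\<Sum>(x, y)\<leftarrow>\<Delta> v. \<Sum>(p, q)\<leftarrow>\<Delta> y. \<gamma> x p q)"
    using coassoc by blast
  show "\<forall>b\<in>B. \<forall>v xs. (\<forall>(p, q)\<in>set xs. p \<in> B) \<and> teq sc sc (\<Delta> b) xs \<longrightarrow>
          teqC sc sc (ABplus \<epsilon> B) (\<Delta> (b * v)) (concat (map (\<lambda>(p, q). map (\<lambda>(x, y). (p * x, q * y)) (\<Delta> v)) xs))"
  proof (intro ballI allI impI)
    fix b v xs assume "(\<forall>(p, q)\<in>set xs. p \<in> B) \<and> teq sc sc (\<Delta> b) xs"
    then have "teq sc sc (\<Delta> b) xs" by blast
    from teq_trans[OF D_mul teq_prod[OF this]]
    show "teqC sc sc (ABplus \<epsilon> B) (\<Delta> (b * v)) (concat (map (\<lambda>(p, q). map (\<lambda>(x, y). (p * x, q * y)) (\<Delta> v)) xs))"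
      by (intro teq_teqC) simp
  qed
  show "\<forall>v w w'. \<Phi> (st v * (w + w')) = \<Phi> (st v * w) + \<Phi> (st v * w')" by (simp add: distrib_left)
  show "\<forall>c v w. \<Phi> (st v * sc c w) = c * \<Phi> (st v * w)" by (simp add: sc_mul2)
  show "\<forall>v w. \<Phi> (st w * v) = cnj (\<Phi> (st v * w))" using herm by blast
  show "\<forall>v. 0 \<le> Re (\<Phi> (st v * v)) \<and> (\<Phi> (st v * v) = 0 \<longrightarrow> v = 0)" using Phi_pos faithful by blast
  show "\<forall>b\<in>B. \<forall>v w. \<Phi> (st v * (b * w)) = \<Phi> (st (st b * v) * w)" by (simp add: mult.assoc)
  show "\<forall>v w. (\<Sum>(x, y)\<leftarrow>\<Delta> w. sc (\<Phi> (st v * x)) y) - (\<Sum>(x, y)\<leftarrow>\<Delta> v. sc (\<Phi> (st x * w)) (st (S y))) \<in> ABplus \<epsilon> B"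
  proof (intro allI)
    fix v w
    have "0 \<in> ABplus \<epsilon> B" unfolding ABplus_def by (rule CollectI, rule exI[of _ "[]"]) simp
    then show "(\<Sum>(x, y)\<leftarrow>\<Delta> w. sc (\<Phi> (st v * x)) y) - (\<Sum>(x, y)\<leftarrow>\<Delta> v. sc (\<Phi> (st x * w)) (st (S y))) \<in> ABplus \<epsilon> B"
      using unit_C[of v w] by (simp add: vs_def)
  qed
qed

end

theorem mainTheorem11:
  fixes sc :: "complex \<Rightarrow> 'a::ring_1 \<Rightarrow> 'a"
    and \<Delta> :: "'a \<Rightarrow> ('a \<times> 'a) list" and \<epsilon> :: "'a \<Rightarrow> complex"
    and S st :: "'a \<Rightarrow> 'a" and \<Phi> :: "'a \<Rightarrow> complex" and B :: "'a set"
  assumes "cqg_hopf sc \<Delta> \<epsilon> S st \<Phi>"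
    and "right_coideal_star_subalg sc \<Delta> st B"
  shows "DK_rep sc \<Delta> \<epsilon> S st B sc (\<lambda>b a. b * a) \<Delta> (\<lambda>a a'. \<Phi> (st a * a'))"
proof -
  interpret cqg sc \<Delta> \<epsilon> S st \<Phi> by (rule cqg.intro) (rule assms(1))
  show ?thesis by (rule main)
qed

end
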